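(* Let $G$ be a finite subset of $\mathbb{N}^2$ that has at least one connected v-bridge. If $G$ contains a connected component $C$ (of the full grid graph of $G$) such that $C\cap(\{r_G\}\times\mathbb{N})\neq\emptyset$ and $C\cap(\mathbb{N}\times\{b_G\})=\emptyset$, then there exists a point $\vec x_E\in G\setminus C$ such that $E(\vec x_E)\notin G$ and $\vec x_E\notin\{r_G\}\times\mathbb{N}$.
   Context: The full grid graph of $V\subseteq\mathbb{Z}^2$ has vertex set $V$ and an edge between $\vec x,\vec y$ iff $\|\vec x-\vec y\|=1$; paths and connected components are taken in this graph. For a finite $S\subseteq\mathbb{Z}^2$ let $l_S=\min_{(x,y)\in S}x$, $r_S=\max_{(x,y)\in S}x$, $b_S=\min_{(x,y)\in S}y$, $t_S=\max_{(x,y)\in S}y$. An h-bridge of $S$ is a subset of $S$ of the form $\{(l_S,y),(r_S,y)\}$; a v-bridge is a subset of $S$ of the form $\{(x,b_S),(x,t_S)\}$. A bridge is connected if there is a simple path in (the full grid graph of) $S$ connecting its two points. Directions: $N(x,y)=(x,y+1)$, $E(x,y)=(x+1,y)$, $S(x,y)=(x,y-1)$, $W(x,y)=(x-1,y)$. *)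

theory Defs
  imports Main
begin

type_synonym pt = "nat \<times> nat"

definition grid_adj :: "pt \<Rightarrow> pt \<Rightarrow> bool" where
  "grid_adj p q \<longleftrightarrow>
     (fst p = fst q \<and> (snd q = snd p + 1 \<or> snd p = snd q + 1)) \<or>
     (snd p = snd q \<and> (fst q = fst p + 1 \<or> fst p = fst q + 1))"

definition dirE :: "pt \<Rightarrow> pt" where
  "dirE p = (fst p + 1, snd p)"

definition lS :: "pt set \<Rightarrow> nat" where "lS S = Min (fst ` S)"
definition rS :: "pt set \<Rightarrow> nat" where "rS S = Max (fst ` S)"
definition bS :: "pt set \<Rightarrow> nat" where "bS S = Min (snd ` S)"
definition tS :: "pt set \<Rightarrow> nat" where "tS S = Max (snd ` S)"

definition simple_path_in :: "pt set \<Rightarrow> pt list \<Rightarrow> bool" where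
  "simple_path_in S ps \<longleftrightarrow> ps \<noteq> [] \<and> distinct ps \<and> set ps \<subseteq> S \<and>
     (\<forall>i. Suc i < length ps \<longrightarrow> grid_adj (ps ! i) (ps ! Suc i))"

definition connected_in :: "pt set \<Rightarrow> pt \<Rightarrow> pt \<Rightarrow> bool" where
  "connected_in S p q \<longleftrightarrow>
     (\<exists>ps. simple_path_in S ps \<and> hd ps = p \<and> last ps = q)"

definition v_bridge :: "pt set \<Rightarrow> pt set \<Rightarrow> bool" where
  "v_bridge S B \<longleftrightarrow> B \<subseteq> S \<and> (\<exists>x. B = {(x, bS S), (x, tS S)})"

definition connected_v_bridge :: "pt set \<Rightarrow> pt set \<Rightarrow> bool" where
  "connected_v_bridge S B \<longleftrightarrow> v_bridge S B \<and>
     (\<exists>x. B = {(x, bS S), (x, tS S)} \<and> connected_in S (x, bS S) (x, tS S))"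

definition component :: "pt set \<Rightarrow> pt set \<Rightarrow> bool" where
  "component G C \<longleftrightarrow> (\<exists>p\<in>G. C = {q \<in> G. connected_in G p q})"

end

theory Submission
  imports Defs
begin

definition stp :: "pt set \<Rightarrow> pt \<Rightarrow> pt \<Rightarrow> bool" where
  "stp S u v \<longleftrightarrow> grid_adj u v \<and> v \<in> S"

lemma grid_adj_sym: "grid_adj p q \<Longrightarrow> grid_adj q p"
  unfolding grid_adj_def by auto

lemma stp_sym_rt:
  assumes "(stp S)\<^sup>*\<^sup>* a b" "a \<in> S"
  shows "b \<in> S \<and> (stp S)\<^sup>*\<^sup>* b a"
  using assms
proof (induction rule: rtranclp_induct)
  case base then show ?case by simp
next
  case (step b c)
  then have "b \<in> S" "(stp S)\<^sup>*\<^sup>* b a" by auto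
  moreover have "stp S c b" using step(2) \<open>b \<in> S\<close> grid_adj_sym unfolding stp_def by blast
  ultimately show ?case using step(2) unfolding stp_def
    by (metis (no_types, lifting) converse_rtranclp_into_rtranclp stp_def)
qed

lemma rt_conn:
  assumes "(stp S)\<^sup>*\<^sup>* a b" "a \<in> S"
  shows "connected_in S a b"
  using assms
proof (induction rule: rtranclp_induct)
  case base
  then show ?case unfolding connected_in_def simple_path_in_def
    by (intro exI[of _ "[a]"]) auto
next
  case (step b c)
  then obtain ps where ps: "simple_path_in S ps" "hd ps = a" "last ps = b"
    unfolding connected_in_def by blast
  have cS: "c \<in> S" and adj: "grid_adj b c" using step(2) unfolding stp_def by auto
  show ?case
  proof (cases "c \<in> set ps")
    case True
    then obtain i where i: "i < length ps" "ps ! i = c" by (meson in_set_conv_nth)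
    let ?qs = "take (Suc i) ps"
    have "simple_path_in S ?qs"
      using ps(1) i unfolding simple_path_in_def
      by (auto dest: in_set_takeD)
    moreover have "hd ?qs = a" using ps i by (simp add: hd_take)
    moreover have "last ?qs = c" using i by (simp add: take_Suc_conv_app_nth)
    ultimately show ?thesis unfolding connected_in_def by blast
  next
    case False
    let ?qs = "ps @ [c]"
    have ne: "ps \<noteq> []" using ps(1) unfolding simple_path_in_def by auto
    have "\<forall>j. Suc j < length ?qs \<longrightarrow> grid_adj (?qs ! j) (?qs ! Suc j)"
    proof (intro allI impI)
      fix j assume j: "Suc j < length ?qs"
      show "grid_adj (?qs ! j) (?qs ! Suc j)"
      proof (cases "Suc j < length ps")
        case True then show ?thesis using ps(1) unfolding simple_path_in_def
          by (simp add: nth_append)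
      next
        case False
        then have "j = length ps - 1" using j by simp
        then have "?qs ! j = b" "?qs ! Suc j = c" using ne ps(3)
          by (auto simp: nth_append last_conv_nth)
        then show ?thesis using adj by simp
      qed
    qed
    then have "simple_path_in S ?qs" using ps(1) False cS unfolding simple_path_in_def by auto
    moreover have "hd ?qs = a" using ps ne by simp
    moreover have "last ?qs = c" by simp
    ultimately show ?thesis unfolding connected_in_def by blast
  qed
qed

lemma path_rt:
  assumes "simple_path_in S ps" "i < length ps"
  shows "(stp S)\<^sup>*\<^sup>* (ps ! 0) (ps ! i)"
  using assms(2)
proof (induction i)
  case 0 then show ?case by simp
next
  case (Suc i)
  then have "(stp S)\<^sup>*\<^sup>* (ps ! 0) (ps ! i)" by simp
  moreover have "stp S (ps ! i) (ps ! Suc i)"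
    using assms(1) Suc(2) unfolding simple_path_in_def stp_def by auto
  ultimately show ?case by (rule rtranclp.rtrancl_into_rtrancl)
qed

lemma conn_rt:
  assumes "connected_in S a b"
  shows "(stp S)\<^sup>*\<^sup>* a b"
proof -
  obtain ps where ps: "simple_path_in S ps" "hd ps = a" "last ps = b"
    using assms unfolding connected_in_def by blast
  have ne: "ps \<noteq> []" using ps(1) unfolding simple_path_in_def by auto
  have "(stp S)\<^sup>*\<^sup>* (ps ! 0) (ps ! (length ps - 1))"
    using path_rt[OF ps(1)] ne by simp
  then show ?thesis using ps ne by (simp add: hd_conv_nth last_conv_nth)
qed

lemma discrete_ivt:
  fixes f :: "nat \<Rightarrow> nat"
  assumes "f 0 \<le> y" "y \<le> f n" "\<forall>i<n. f (Suc i) \<le> f i + 1"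
  shows "\<exists>i\<le>n. f i = y"
  using assms
proof (induction n)
  case 0 then show ?case by simp
next
  case (Suc n)
  show ?case
  proof (cases "y \<le> f n")
    case True
    then obtain i where "i \<le> n" "f i = y" using Suc.IH Suc.prems(1,3) by auto
    then show ?thesis by (intro exI[of _ i]) auto
  next
    case False
    then have "f (Suc n) = y" using Suc(3,4) by force
    then show ?thesis by blast
  qed
qed

theorem mainTheorem5:
  fixes G C :: "(nat \<times> nat) set"
  assumes "finite G"
    and "\<exists>B. connected_v_bridge G B"
    and "component G C"
    and "C \<inter> {p. fst p = rS G} \<noteq> {}"
    and "C \<inter> {p. snd p = bS G} = {}"
  shows "\<exists>xE \<in> G - C. dirE xE \<notin> G \<and> fst xE \<noteq> rS G"
proof (rule ccontr)
  assume neg: "\<not> ?thesis"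
  obtain x0 where br: "connected_in G (x0, bS G) (x0, tS G)"
    using assms(2) unfolding connected_v_bridge_def by blast
  obtain ps where ps: "simple_path_in G ps" "hd ps = (x0, bS G)" "last ps = (x0, tS G)"
    using br unfolding connected_in_def by blast
  have ne: "ps \<noteq> []" using ps(1) unfolding simple_path_in_def by auto
  have w0G: "(x0, bS G) \<in> G" using ps ne unfolding simple_path_in_def
    by (metis hd_in_set subsetD)
  obtain p where pG: "p \<in> G" and Cdef: "C = {q \<in> G. connected_in G p q}"
    using assms(3) unfolding component_def by blast
  obtain c where cC: "c \<in> C" and cr: "fst c = rS G" using assms(4) by blast
  have cG: "c \<in> G" using cC Cdef by auto
  have D: "z \<notin> C" if "(stp G)\<^sup>*\<^sup>* (x0, bS G) z" for z
  proof
    assume "z \<in> C"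
    then have "(stp G)\<^sup>*\<^sup>* p z" using Cdef conn_rt by auto
    moreover have "(stp G)\<^sup>*\<^sup>* z (x0, bS G)" using stp_sym_rt[OF that w0G] by blast
    ultimately have "(stp G)\<^sup>*\<^sup>* p (x0, bS G)" by simp
    then have "(x0, bS G) \<in> C" using Cdef rt_conn[OF _ pG] w0G by auto
    then show False using assms(5) by auto
  qed
  define y where "y = snd c"
  have fin: "finite (snd ` G)" "finite (fst ` G)" using assms(1) by auto
  have yb: "bS G \<le> y" unfolding bS_def y_def using cG fin by auto
  have yt: "y \<le> tS G" unfolding tS_def y_def using cG fin by auto
  define f where "f i = snd (ps ! i)" for i
  have "\<exists>i\<le>length ps - 1. f i = y"
  proof (rule discrete_ivt)
    show "f 0 \<le> y" using ps(2) ne yb by (simp add: f_def hd_conv_nth)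
    show "y \<le> f (length ps - 1)" using ps(3) ne yt by (simp add: f_def last_conv_nth)
    show "\<forall>i<length ps - 1. f (Suc i) \<le> f i + 1"
    proof (intro allI impI)
      fix j assume "j < length ps - 1"
      then have "grid_adj (ps ! j) (ps ! Suc j)" using ps(1) unfolding simple_path_in_def by auto
      then show "f (Suc j) \<le> f j + 1" unfolding f_def grid_adj_def by auto
    qed
  qed
  then obtain i where i0: "i \<le> length ps - 1" "f i = y" by blast
  have i: "i < length ps" "f i = y" using i0 ne by (cases ps, auto)
  obtain x1 where x1: "ps ! i = (x1, y)" using i(2) unfolding f_def by (metis prod.collapse)
  have r1: "(stp G)\<^sup>*\<^sup>* (x0, bS G) (x1, y)"
    using path_rt[OF ps(1) i(1)] ps(2) ne x1 by (simp add: hd_conv_nth)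
  have x1G: "(x1, y) \<in> G" using ps(1) i(1) x1 unfolding simple_path_in_def
    by (metis nth_mem subsetD)
  have x1r: "x1 \<le> rS G" unfolding rS_def using x1G fin by (metis Max_ge fst_conv image_eqI)
  have ind: "n \<le> rS G - x1 \<Longrightarrow> (stp G)\<^sup>*\<^sup>* (x0, bS G) (x1 + n, y)" for n
  proof (induction n)
    case 0 then show ?case using r1 by simp
  next
    case (Suc n)
    then have IH: "(stp G)\<^sup>*\<^sup>* (x0, bS G) (x1 + n, y)" by simp
    have inG: "(x1 + n, y) \<in> G" using stp_sym_rt[OF IH w0G] by blast
    have "(x1 + n, y) \<notin> C" using D[OF IH] .
    moreover have "fst (x1 + n, y) \<noteq> rS G" using Suc(2) by simp
    ultimately have "dirE (x1 + n, y) \<in> G" using neg inG by blast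
    then have "stp G (x1 + n, y) (x1 + Suc n, y)"
      unfolding stp_def dirE_def grid_adj_def by simp
    with IH show ?case by (rule rtranclp.rtrancl_into_rtrancl)
  qed
  have "(stp G)\<^sup>*\<^sup>* (x0, bS G) (x1 + (rS G - x1), y)" using ind by simp
  then have "(stp G)\<^sup>*\<^sup>* (x0, bS G) c" using x1r cr y_def by (metis le_add_diff_inverse prod.collapse)
  then show False using D cC by blast
qed

end
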